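(* Consider the following local training on device $k$. Let $\mathcal{D}_k$ be a finite dataset of $D_k$ labelled samples $(\bm{x},y)$ with labels in $\mathcal{C}=\{1,\dots,C\}$, and $\mathcal{D}_{k,c}\subseteq\mathcal{D}_k$ the samples of class $c$. The model is $\bm{w}_k=(\bm{u}_k,\bm{v}_k)$, with feature extractor $h_k(\bm{x};\bm{u}_k)\in\mathbb{R}^p$, and empirical loss $F_k(\bm{u}_k,\bm{v}_k)=\frac{1}{D_k}\sum_{(\bm{x},y)\in\mathcal{D}_k} f(\bm{x},y;\bm{w}_k)$. Given global class vectors $\bm{\Omega}_{c,t}\in\mathbb{R}^p$ ($c\in\mathcal{C}$) for round $t$, define the knowledge loss $L_k(\bm{u}) = \frac{1}{D_k}\sum_{c=1}^C\sum_{(\bm{x},y)\in\mathcal{D}_{k,c}}\frac12\|h_k(\bm{x};\bm{u})-\bm{\Omega}_{c,t}\|^2$. Starting from $\bm{u}_{k,t,0}=\bm{u}_{k,t}$, $\bm{v}_{k,t,0}=\bm{v}_{k,t}$, perform for $l=0,\dots,\tau-1$: $\bm{u}_{k,t,l+1} = \bm{u}_{k,t,l} - \eta_u\big(\nabla_{\bm{u}}F_k(\bm{u}_{k,t,l},\bm{v}_{k,t,l}) + \lambda\nabla L_k(\bm{u}_{k,t,l})\big)$, $\bm{v}_{k,t,l+1} = \bm{v}_{k,t,l} - \eta_v\nabla_{\bm{v}}F_k(\bm{u}_{k,t,l},\bm{v}_{k,t,l})$, and set $\bm{u}_{k,t+1}=\bm{u}_{k,t,\tau}$, $\bm{v}_{k,t+1}=\bm{v}_{k,t,\tau}$.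 Assume: (i) $F_k$ is continuously differentiable and $\nabla_{\bm{u}}F_k$ is $L_u$-Lipschitz in $\bm{u}$ and $L_{uv}$-Lipschitz in $\bm{v}$, $\nabla_{\bm{v}}F_k$ is $L_v$-Lipschitz in $\bm{v}$ and $L_{vu}$-Lipschitz in $\bm{u}$; (ii) $\|\nabla_{\bm{u}}F_k(\bm{u}_{k,t},\bm{v}_{k,t})\|^2\le G_1^2$ and $\|\nabla_{\bm{v}}F_k(\bm{u}_{k,t},\bm{v}_{k,t})\|^2\le G_2^2$ (uniformly over all iterates); (iii) $\|\nabla h_k(\bm{u}_k)\|^2\le\vartheta^2$ and $\|h_k(\bm{u}_k;\bm{x})\|^2\le\varsigma^2$. Let $\chi=\max\{L_{uv},L_{vu}\}/\sqrt{L_uL_v}$, and suppose $\eta_u\le \frac{1}{4\tau(1+\chi)L_u}$ and $\eta_v\le\frac{1}{2\tau(1+\chi)L_v}$. Then $$F_k(\bm{u}_{k,t+1},\bm{v}_{k,t+1}) - F_k(\bm{u}_{k,t},\bm{v}_{k,t}) \le \Big(2(1+\chi)L_u\eta_u^2\tau^2 - \tfrac12\eta_u\tau\Big)\|\nabla_{\bm{u}}F_k(\bm{u}_{k,t},\bm{v}_{k,t})\|^2 + \Big((1+\chi)L_v\eta_v^2\tau^2 - \tfrac12\eta_v\tau\Big)\|\nabla_{\bm{v}}F_k(\bm{u}_{k,t},\bm{v}_{k,t})\|^2 + A_1 + \tfrac54\eta_u\lambda^2\sum_{l=0}^{\tau-1}\|\nabla L_k(\bm{u}_{k,t,l})\|^2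 + 2\eta_u^2\lambda^2(3\eta_uL_u^2 + 2\eta_v\chi^2L_uL_v)\sum_{l=0}^{\tau-1}(\tau-l)\|\nabla L_k(\bm{u}_{k,t,l})\|^2,$$ where $A_1 = \tau(\tau+1)(2\tau+1)\Big(\eta_u^3G_1^2L_u^2 + \tfrac13\eta_v^3G_2^2L_v^2 + \big(\tfrac23\eta_uG_1^2 + \tfrac12\eta_vG_2^2\big)\eta_u\eta_v\chi^2L_uL_v\Big)$.
   Context: $f(\bm{x},y;\bm{w})$ is a sample-wise loss; $\lambda\ge0$ is a weight hyperparameter; $\tau$ is the number of local gradient steps; $\eta_u,\eta_v>0$ are learning rates; $\|\cdot\|$ is the Euclidean norm. *)

theory Defs
  imports "HOL-Analysis.Analysis"
begin

definition emp_loss :: "('x \<times> nat) set \<Rightarrow> ('x \<Rightarrow> nat \<Rightarrow> 'u \<Rightarrow> 'v \<Rightarrow> real) \<Rightarrow> 'u \<Rightarrow> 'v \<Rightarrow> real" where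
  "emp_loss D f u v = (1 / real (card D)) * (\<Sum>(x,y)\<in>D. f x y u v)"

definition knowledge_loss :: "('x \<times> nat) set \<Rightarrow> nat \<Rightarrow> ('x \<Rightarrow> 'u \<Rightarrow> 'h::real_normed_vector) \<Rightarrow> (nat \<Rightarrow> 'h) \<Rightarrow> 'u \<Rightarrow> real" where
  "knowledge_loss D C h \<Omega> u = (1 / real (card D)) *
     (\<Sum>c\<in>{1..C}. \<Sum>(x,y)\<in>{s\<in>D. snd s = c}. (1/2) * (norm (h x u - \<Omega> c))\<^sup>2)"

primrec local_iter :: "real \<Rightarrow> real \<Rightarrow> real \<Rightarrow> ('u \<Rightarrow> 'v \<Rightarrow> 'u::real_vector) \<Rightarrow> ('u \<Rightarrow> 'v \<Rightarrow> 'v::real_vector)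
   \<Rightarrow> ('u \<Rightarrow> 'u) \<Rightarrow> 'u \<Rightarrow> 'v \<Rightarrow> nat \<Rightarrow> 'u \<times> 'v" where
  "local_iter \<eta>u \<eta>v lam gu gv gL u0 v0 0 = (u0, v0)"
| "local_iter \<eta>u \<eta>v lam gu gv gL u0 v0 (Suc l) =
     (let (u, v) = local_iter \<eta>u \<eta>v lam gu gv gL u0 v0 l in
       (u - \<eta>u *\<^sub>R (gu u v + lam *\<^sub>R gL u), v - \<eta>v *\<^sub>R gv u v))"

end

theory Submission
  imports Defs
begin

lemma descent:
  fixes Fp :: "'u::euclidean_space \<times> 'v::euclidean_space \<Rightarrow> real"
    and gu :: "'u \<Rightarrow> 'v \<Rightarrow> 'u" and gv :: "'u \<Rightarrow> 'v \<Rightarrow> 'v"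
  assumes D: "\<And>u v. (Fp has_derivative (\<lambda>d. gu u v \<bullet> fst d + gv u v \<bullet> snd d)) (at (u, v))"
    and Lip_uu: "\<And>u u' v. norm (gu u v - gu u' v) \<le> Lu * norm (u - u')"
    and Lip_uv: "\<And>u v v'. norm (gu u v - gu u v') \<le> Luv * norm (v - v')"
    and Lip_vv: "\<And>u v v'. norm (gv u v - gv u v') \<le> Lv * norm (v - v')"
    and Lip_vu: "\<And>u u' v. norm (gv u v - gv u' v) \<le> Lvu * norm (u - u')"
  shows "Fp (u + U, v + V) - Fp (u, v) \<le> gu u v \<bullet> U + gv u v \<bullet> V
           + (Lu * (norm U)\<^sup>2 + (Luv + Lvu) * norm U * norm V + Lv * (norm V)\<^sup>2) / 2"
proof -
  define M where "M = Lu * (norm U)\<^sup>2 + (Luv + Lvu) * norm U * norm V + Lv * (norm V)\<^sup>2"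
  define c where "c = gu u v \<bullet> U + gv u v \<bullet> V"
  define \<psi> where "\<psi> t = Fp (u + t *\<^sub>R U, v + t *\<^sub>R V) - t * c - t\<^sup>2 / 2 * M" for t :: real
  define \<psi>' where "\<psi>' t = gu (u + t *\<^sub>R U) (v + t *\<^sub>R V) \<bullet> U + gv (u + t *\<^sub>R U) (v + t *\<^sub>R V) \<bullet> V - c - t * M" for t :: real
  have der: "(\<psi> has_real_derivative \<psi>' t) (at t)" for t
  proof -
    have l: "((\<lambda>t. (u + t *\<^sub>R U, v + t *\<^sub>R V)) has_derivative (\<lambda>h. (h *\<^sub>R U, h *\<^sub>R V))) (at t)"
      by (auto intro!: derivative_eq_intros simp: prod_eq_iff)
    have "((\<lambda>t. Fp (u + t *\<^sub>R U, v + t *\<^sub>R V)) has_derivative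
          (\<lambda>h. gu (u + t *\<^sub>R U) (v + t *\<^sub>R V) \<bullet> fst (h *\<^sub>R U, h *\<^sub>R V) + gv (u + t *\<^sub>R U) (v + t *\<^sub>R V) \<bullet> snd (h *\<^sub>R U, h *\<^sub>R V))) (at t)"
      using has_derivative_compose[OF l D] by (simp add: o_def)
    then have "((\<lambda>t. Fp (u + t *\<^sub>R U, v + t *\<^sub>R V)) has_real_derivative
          (gu (u + t *\<^sub>R U) (v + t *\<^sub>R V) \<bullet> U + gv (u + t *\<^sub>R U) (v + t *\<^sub>R V) \<bullet> V)) (at t)"
      unfolding has_field_derivative_def
      by (rule has_derivative_eq_rhs) (auto simp: algebra_simps fun_eq_iff)
    then show ?thesis unfolding \<psi>_def \<psi>'_def
      by (auto intro!: derivative_eq_intros)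
  qed
  have neg: "\<psi>' t \<le> 0" if "0 \<le> t" for t
  proof -
    let ?a = "u + t *\<^sub>R U" and ?b = "v + t *\<^sub>R V"
    have e1: "norm (gu ?a ?b - gu u v) \<le> t * (Lu * norm U + Luv * norm V)"
    proof -
      have "norm (gu ?a ?b - gu u v) \<le> norm (gu ?a ?b - gu u ?b) + norm (gu u ?b - gu u v)"
        by (rule norm_diff_triangle_le) auto
      also have "\<dots> \<le> Lu * norm (?a - u) + Luv * norm (?b - v)"
        using Lip_uu Lip_uv by (meson add_mono)
      also have "\<dots> = t * (Lu * norm U + Luv * norm V)" using that by (simp add: algebra_simps)
      finally show ?thesis .
    qed
    have e2: "norm (gv ?a ?b - gv u v) \<le> t * (Lvu * norm U + Lv * norm V)"
    proof -
      have "norm (gv ?a ?b - gv u v) \<le> norm (gv ?a ?b - gv u ?b) + norm (gv u ?b - gv u v)"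
        by (rule norm_diff_triangle_le) auto
      also have "\<dots> \<le> Lvu * norm (?a - u) + Lv * norm (?b - v)"
        using Lip_vu Lip_vv by (meson add_mono)
      also have "\<dots> = t * (Lvu * norm U + Lv * norm V)" using that by (simp add: algebra_simps)
      finally show ?thesis .
    qed
    have "\<psi>' t = (gu ?a ?b - gu u v) \<bullet> U + (gv ?a ?b - gv u v) \<bullet> V - t * M"
      unfolding \<psi>'_def c_def by (simp add: inner_diff_left)
    also have "\<dots> \<le> norm (gu ?a ?b - gu u v) * norm U + norm (gv ?a ?b - gv u v) * norm V - t * M"
      using norm_cauchy_schwarz[of "gu ?a ?b - gu u v" U] norm_cauchy_schwarz[of "gv ?a ?b - gv u v" V]
      by linarith
    also have "\<dots> \<le> t * (Lu * norm U + Luv * norm V) * norm U + t * (Lvu * norm U + Lv * norm V) * norm V - t * M"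
      using mult_right_mono[OF e1 norm_ge_zero[of U]] mult_right_mono[OF e2 norm_ge_zero[of V]] by linarith
    also have "\<dots> = 0" unfolding M_def by (simp add: algebra_simps power2_eq_square)
    finally show ?thesis .
  qed
  obtain z where z: "0 < z" "z < 1" "\<psi> 1 - \<psi> 0 = (1 - 0) * \<psi>' z"
    using MVT2[of 0 1 \<psi> \<psi>'] der by auto
  have "\<psi> 1 \<le> \<psi> 0" using z neg[of z] by simp
  then show ?thesis unfolding \<psi>_def M_def c_def by simp
qed

lemma scal_u:
  fixes a t K Lu n w :: real
  assumes "a > 0" "t > 0" "0 \<le> K*Lu*a*t" "K*Lu*a*t \<le> 1/4"
  shows "-a*t*n\<^sup>2 + a*n*w + K*Lu*a\<^sup>2/2*(t*n+w)\<^sup>2 \<le> (2*K*Lu*a\<^sup>2*t\<^sup>2 - 1/2*a*t)*n\<^sup>2 + 4*a/(7*t)*w\<^sup>2"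
proof -
  define zz where "zz = K*Lu*a*t"
  define X where "X = t*n"
  have s0: "0 \<le> zz" "zz \<le> 1/4" using assms by (auto simp: zz_def)
  have key: "-X\<^sup>2 + X*w + zz/2*(X+w)\<^sup>2 \<le> (2*zz-1/2)*X\<^sup>2 + 4/7*w\<^sup>2"
  proof -
    have d: "0 \<le> 1/7 + 3*zz/7 - 4*zz\<^sup>2"
    proof -
      have "0 \<le> (1/4 - zz)*(4*zz + 4/7)" using s0 by (intro mult_nonneg_nonneg) auto
      moreover have "(1/4 - zz)*(4*zz + 4/7) = 1/7 + 3*zz/7 - 4*zz\<^sup>2" by (simp add: field_simps power2_eq_square)
      ultimately show ?thesis by simp
    qed
    have "0 \<le> (1/2+3*zz/2)*X\<^sup>2 - (1+zz)*X*w + (4/7 - zz/2)*w\<^sup>2"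
    proof -
      have al: "1/2+3*zz/2 > 0" using s0 by simp
      have "(1/2+3*zz/2)*((1/2+3*zz/2)*X\<^sup>2 - (1+zz)*X*w + (4/7 - zz/2)*w\<^sup>2)
            = ((1/2+3*zz/2)*X - (1+zz)/2*w)\<^sup>2 + (1/4)*(1/7 + 3*zz/7 - 4*zz\<^sup>2)*w\<^sup>2"
        by (simp add: field_simps power2_eq_square)
      also have "\<dots> \<ge> 0" using d by simp
      finally show ?thesis using al by (simp add: zero_le_mult_iff)
    qed
    then show ?thesis by (simp add: algebra_simps power2_eq_square)
  qed
  have "-a*t*n\<^sup>2 + a*n*w + K*Lu*a\<^sup>2/2*(t*n+w)\<^sup>2 = (a/t) * (-X\<^sup>2 + X*w + zz/2*(X+w)\<^sup>2)"
    using assms by (simp add: X_def zz_def field_simps power2_eq_square)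
  also have "\<dots> \<le> (a/t) * ((2*zz-1/2)*X\<^sup>2 + 4/7*w\<^sup>2)"
    using key assms by (intro mult_left_mono) auto
  also have "\<dots> = (2*K*Lu*a\<^sup>2*t\<^sup>2 - 1/2*a*t)*n\<^sup>2 + 4*a/(7*t)*w\<^sup>2"
    using assms by (simp add: X_def zz_def field_simps power2_eq_square)
  finally show ?thesis .
qed

lemma scal_v:
  fixes b t K Lv m w :: real
  assumes "b > 0" "t > 0" "0 \<le> K*Lv*b*t" "K*Lv*b*t \<le> 1/2"
  shows "-b*t*m\<^sup>2 + b*m*w + K*Lv*b\<^sup>2/2*(t*m+w)\<^sup>2 \<le> (K*Lv*b\<^sup>2*t\<^sup>2 - 1/2*b*t)*m\<^sup>2 + b/t*w\<^sup>2"
proof -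
  define zz where "zz = K*Lv*b*t"
  define X where "X = t*m"
  have s0: "0 \<le> zz" "zz \<le> 1/2" using assms by (auto simp: zz_def)
  have key: "-X\<^sup>2 + X*w + zz/2*(X+w)\<^sup>2 \<le> (zz-1/2)*X\<^sup>2 + w\<^sup>2"
  proof -
    have "0 \<le> (1/2+zz/2)*X\<^sup>2 - (1+zz)*X*w + (1 - zz/2)*w\<^sup>2"
    proof -
      have al: "1/2+zz/2 > 0" using s0 by simp
      have "(1/2+zz/2)*((1/2+zz/2)*X\<^sup>2 - (1+zz)*X*w + (1 - zz/2)*w\<^sup>2)
            = ((1/2+zz/2)*X - (1+zz)/2*w)\<^sup>2 + ((1+zz)*(1-2*zz)/4)*w\<^sup>2"
        by (simp add: field_simps power2_eq_square)
      also have "\<dots> \<ge> 0" using s0 by (intro add_nonneg_nonneg) (auto intro!: mult_nonneg_nonneg)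
      finally show ?thesis using al by (simp add: zero_le_mult_iff)
    qed
    then show ?thesis by (simp add: algebra_simps power2_eq_square)
  qed
  have "-b*t*m\<^sup>2 + b*m*w + K*Lv*b\<^sup>2/2*(t*m+w)\<^sup>2 = (b/t) * (-X\<^sup>2 + X*w + zz/2*(X+w)\<^sup>2)"
    using assms by (simp add: X_def zz_def field_simps power2_eq_square)
  also have "\<dots> \<le> (b/t) * ((zz-1/2)*X\<^sup>2 + w\<^sup>2)"
    using key assms by (intro mult_left_mono) auto
  also have "\<dots> = (K*Lv*b\<^sup>2*t\<^sup>2 - 1/2*b*t)*m\<^sup>2 + b/t*w\<^sup>2"
    using assms by (simp add: X_def zz_def field_simps power2_eq_square)
  finally show ?thesis .
qed

lemma sq_split: fixes x y e :: real assumes "e > 0"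
  shows "(x + y)\<^sup>2 \<le> (1 + e) * x\<^sup>2 + (1 + 1/e) * y\<^sup>2"
proof -
  have "0 \<le> (e*x - y)\<^sup>2 / e" using assms by simp
  also have "(e*x - y)\<^sup>2 / e = (1 + e) * x\<^sup>2 + (1 + 1/e) * y\<^sup>2 - (x + y)\<^sup>2"
    using assms by (simp add: field_simps power2_eq_square)
  finally show ?thesis by simp
qed

lemma final_scal:
  fixes a b Lu Lv Luv Lvu chi t G1a G2a Yt S :: real
  assumes a: "a > 0" and b: "b > 0" and Lu: "Lu > 0" and Lv: "Lv > 0" and "Luv \<ge> 0" "Lvu \<ge> 0"
    and chi: "chi \<ge> 0"
    and Luv2: "Luv\<^sup>2 \<le> chi\<^sup>2*Lu*Lv" and Lvu2: "Lvu\<^sup>2 \<le> chi\<^sup>2*Lu*Lv" and t: "t \<ge> 1"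
    and su: "(1+chi)*Lu*a*t \<le> 1/4" and sv: "(1+chi)*Lv*b*t \<le> 1/2"
    and G: "G1a \<ge> 0" "G2a \<ge> 0" and Y: "Yt \<ge> 0" "Yt\<^sup>2 \<le> t*S"
  shows "4*a/(7*t)*((Lu*a*G1a + Luv*b*G2a)*(t*(t-1)/2) + (1 + Lu*a*t)*Yt)\<^sup>2
       + b/t*((Lvu*a*G1a + Lv*b*G2a)*(t*(t-1)/2) + Lvu*a*t*Yt)\<^sup>2
   \<le> t*(t+1)*(2*t+1)*(a^3*G1a\<^sup>2*Lu\<^sup>2 + (1/3)*b^3*G2a\<^sup>2*Lv\<^sup>2
        + ((2/3)*a*G1a\<^sup>2 + (1/2)*b*G2a\<^sup>2)*a*b*chi\<^sup>2*Lu*Lv) + 5/4*a*S"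
proof -
  define A where "A = Lu*a*G1a"
  define B where "B = Luv*b*G2a"
  define C where "C = Lvu*a*G1a"
  define D where "D = Lv*b*G2a"
  define T where "T = t*(t-1)/2"
  define cu where "cu = 1 + Lu*a*t"
  define cv where "cv = Lvu*a*t"
  have tp: "t > 0" using t by simp
  have h1: "((A+B)*T + cu*Yt)\<^sup>2 \<le> 7/2*((A+B)*T)\<^sup>2 + 7/5*(cu*Yt)\<^sup>2"
    using sq_split[of "5/2" "(A+B)*T" "cu*Yt"] by simp
  have h2: "((C+D)*T + cv*Yt)\<^sup>2 \<le> 3/2*((C+D)*T)\<^sup>2 + 3*(cv*Yt)\<^sup>2"
    using sq_split[of "1/2" "(C+D)*T" "cv*Yt"] by simp
  have "4*a/(7*t)*((A+B)*T + cu*Yt)\<^sup>2 + b/t*((C+D)*T + cv*Yt)\<^sup>2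
     \<le> 4*a/(7*t)*(7/2*((A+B)*T)\<^sup>2 + 7/5*(cu*Yt)\<^sup>2) + b/t*(3/2*((C+D)*T)\<^sup>2 + 3*(cv*Yt)\<^sup>2)"
    using h1 h2 a b tp by (intro add_mono mult_left_mono) auto
  also have "\<dots> = (2*a/t*((A+B)*T)\<^sup>2 + 3*b/(2*t)*((C+D)*T)\<^sup>2) + (4*a/5*cu\<^sup>2 + 3*b*cv\<^sup>2) * (Yt\<^sup>2 / t)"
    using tp by (simp add: field_simps power2_eq_square)
  also have "\<dots> \<le> t*(t+1)*(2*t+1)*(a^3*G1a\<^sup>2*Lu\<^sup>2 + (1/3)*b^3*G2a\<^sup>2*Lv\<^sup>2
        + ((2/3)*a*G1a\<^sup>2 + (1/2)*b*G2a\<^sup>2)*a*b*chi\<^sup>2*Lu*Lv) + 5/4*a*S"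
  proof (rule add_mono)
    have AB: "(A+B)\<^sup>2 \<le> 2*A\<^sup>2 + 2*B\<^sup>2" using sq_split[of 1 A B] by simp
    have CD: "(C+D)\<^sup>2 \<le> 3*C\<^sup>2 + 3/2*D\<^sup>2" using sq_split[of 2 C D] by simp
    have tt: "(t-1)\<^sup>2 \<le> (t+1)*(2*t+1)/2"
    proof -
      have "(t+1)*(2*t+1)/2 - (t-1)\<^sup>2 = t*(7/2) - 1/2" by (simp add: field_simps power2_eq_square)
      then show ?thesis using t by simp
    qed
    have e1: "2*a/t*((A+B)*T)\<^sup>2 = t*(t-1)\<^sup>2 * (a/2*(A+B)\<^sup>2)"
      using tp by (simp add: T_def field_simps power2_eq_square)
    have e2: "3*b/(2*t)*((C+D)*T)\<^sup>2 = t*(t-1)\<^sup>2 * (3*b/8*(C+D)\<^sup>2)"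
      using tp by (simp add: T_def field_simps power2_eq_square)
    have m: "a/2*(A+B)\<^sup>2 + 3*b/8*(C+D)\<^sup>2 \<le> a*A\<^sup>2 + a*B\<^sup>2 + 9/8*b*C\<^sup>2 + 9/16*b*D\<^sup>2"
    proof -
      have "a/2*(A+B)\<^sup>2 \<le> a/2*(2*A\<^sup>2 + 2*B\<^sup>2)" using AB a by (intro mult_left_mono) auto
      moreover have "3*b/8*(C+D)\<^sup>2 \<le> 3*b/8*(3*C\<^sup>2 + 3/2*D\<^sup>2)" using CD b by (intro mult_left_mono) auto
      ultimately show ?thesis by (simp add: algebra_simps)
    qed
    have pos: "0 \<le> a*A\<^sup>2 + a*B\<^sup>2 + 9/8*b*C\<^sup>2 + 9/16*b*D\<^sup>2" using a b by simp
    have "2*a/t*((A+B)*T)\<^sup>2 + 3*b/(2*t)*((C+D)*T)\<^sup>2 \<le> t*(t-1)\<^sup>2*(a*A\<^sup>2 + a*B\<^sup>2 + 9/8*b*C\<^sup>2 + 9/16*b*D\<^sup>2)"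
      unfolding e1 e2 distrib_left[symmetric] using m tp by (intro mult_left_mono) (simp_all add: algebra_simps)
    also have "\<dots> \<le> t*((t+1)*(2*t+1)/2)*(a*A\<^sup>2 + a*B\<^sup>2 + 9/8*b*C\<^sup>2 + 9/16*b*D\<^sup>2)"
      using tt pos tp by (intro mult_right_mono mult_left_mono) auto
    also have "\<dots> = t*(t+1)*(2*t+1)*(a*A\<^sup>2/2 + a*B\<^sup>2/2 + 9/16*b*C\<^sup>2 + 9/32*b*D\<^sup>2)"
      by (simp add: field_simps)
    also have "\<dots> \<le> t*(t+1)*(2*t+1)*(a^3*G1a\<^sup>2*Lu\<^sup>2 + (1/3)*b^3*G2a\<^sup>2*Lv\<^sup>2
        + ((2/3)*a*G1a\<^sup>2 + (1/2)*b*G2a\<^sup>2)*a*b*chi\<^sup>2*Lu*Lv)"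
    proof (rule mult_left_mono)
      have iA: "a*A\<^sup>2 = a^3*G1a\<^sup>2*Lu\<^sup>2" by (simp add: A_def power2_eq_square power3_eq_cube algebra_simps)
      have iD: "b*D\<^sup>2 = b^3*G2a\<^sup>2*Lv\<^sup>2" by (simp add: D_def power2_eq_square power3_eq_cube algebra_simps)
      have iB: "a*B\<^sup>2 \<le> a*b*chi\<^sup>2*Lu*Lv*b*G2a\<^sup>2"
      proof -
        have "a*B\<^sup>2 = (a*b\<^sup>2*G2a\<^sup>2)*Luv\<^sup>2" by (simp add: B_def power2_eq_square algebra_simps)
        also have "\<dots> \<le> (a*b\<^sup>2*G2a\<^sup>2)*(chi\<^sup>2*Lu*Lv)" using Luv2 a by (intro mult_left_mono) auto
        finally show ?thesis by (simp add: power2_eq_square algebra_simps)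
      qed
      have iC: "b*C\<^sup>2 \<le> a*b*chi\<^sup>2*Lu*Lv*a*G1a\<^sup>2"
      proof -
        have "b*C\<^sup>2 = (b*a\<^sup>2*G1a\<^sup>2)*Lvu\<^sup>2" by (simp add: C_def power2_eq_square algebra_simps)
        also have "\<dots> \<le> (b*a\<^sup>2*G1a\<^sup>2)*(chi\<^sup>2*Lu*Lv)" using Lvu2 b by (intro mult_left_mono) auto
        finally show ?thesis by (simp add: power2_eq_square algebra_simps)
      qed
      have pC: "0 \<le> a*b*chi\<^sup>2*Lu*Lv*a*G1a\<^sup>2" using a b Lu Lv by simp
      have pD: "0 \<le> b^3*G2a\<^sup>2*Lv\<^sup>2" using b by simp
      have pA: "0 \<le> a^3*G1a\<^sup>2*Lu\<^sup>2" using a by simp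
      show "a*A\<^sup>2/2 + a*B\<^sup>2/2 + 9/16*b*C\<^sup>2 + 9/32*b*D\<^sup>2 \<le> a^3*G1a\<^sup>2*Lu\<^sup>2 + (1/3)*b^3*G2a\<^sup>2*Lv\<^sup>2
        + ((2/3)*a*G1a\<^sup>2 + (1/2)*b*G2a\<^sup>2)*a*b*chi\<^sup>2*Lu*Lv"
        using iA iB iC iD pC pD pA by (simp add: algebra_simps)
      show "0 \<le> t*(t+1)*(2*t+1)" using tp by simp
    qed
    finally show "2*a/t*((A+B)*T)\<^sup>2 + 3*b/(2*t)*((C+D)*T)\<^sup>2 \<le> t*(t+1)*(2*t+1)*(a^3*G1a\<^sup>2*Lu\<^sup>2 + (1/3)*b^3*G2a\<^sup>2*Lv\<^sup>2
        + ((2/3)*a*G1a\<^sup>2 + (1/2)*b*G2a\<^sup>2)*a*b*chi\<^sup>2*Lu*Lv)" .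
  next
    define zz where "zz = Lu*a*t"
    define \<sigma> where "\<sigma> = Lv*b*t"
    have s0: "0 \<le> zz" using Lu a tp by (simp add: zz_def)
    have \<sigma>0: "0 \<le> \<sigma>" using Lv b tp by (simp add: \<sigma>_def)
    have cs: "chi*zz \<le> 1/4 - zz" using su by (simp add: zz_def algebra_simps)
    have c\<sigma>: "chi*\<sigma> \<le> 1/2" using sv \<sigma>0 by (simp add: \<sigma>_def algebra_simps)
    have s1: "zz \<le> 1/4" using cs chi s0 by (smt (verit) mult_nonneg_nonneg)
    have cv2: "b*cv\<^sup>2 \<le> a*((chi*zz)*(chi*\<sigma>))"
    proof -
      have "b*cv\<^sup>2 = (b*a\<^sup>2*t\<^sup>2)*Lvu\<^sup>2" by (simp add: cv_def power2_eq_square algebra_simps)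
      also have "\<dots> \<le> (b*a\<^sup>2*t\<^sup>2)*(chi\<^sup>2*Lu*Lv)" using Lvu2 b by (intro mult_left_mono) auto
      also have "\<dots> = a*((chi*zz)*(chi*\<sigma>))" by (simp add: zz_def \<sigma>_def power2_eq_square algebra_simps)
      finally show ?thesis .
    qed
    have pr: "(chi*zz)*(chi*\<sigma>) \<le> (1/4 - zz)*(1/2)"
      using cs c\<sigma> chi s0 \<sigma>0 s1 by (intro mult_mono) auto
    have poly: "4/5*(1+zz)\<^sup>2 + 3*((1/4 - zz)*(1/2)) \<le> 5/4"
    proof -
      have "4/5*(1+zz)\<^sup>2 + 3*((1/4 - zz)*(1/2)) - 5/4 = 4/5*((zz - 1/4)*(zz + 3/8))"
        by (simp add: field_simps power2_eq_square)
      moreover have "(zz - 1/4)*(zz + 3/8) \<le> 0" using s0 s1 by (intro mult_nonpos_nonneg) auto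
      ultimately show ?thesis by linarith
    qed
    have "4*a/5*cu\<^sup>2 + 3*b*cv\<^sup>2 \<le> a*(4/5*(1+zz)\<^sup>2 + 3*((1/4 - zz)*(1/2)))"
    proof -
      have "a*((chi*zz)*(chi*\<sigma>)) \<le> a*((1/4 - zz)*(1/2))" using pr a by (intro mult_left_mono) auto
      then have "3*b*cv\<^sup>2 \<le> 3*(a*((1/4 - zz)*(1/2)))" using cv2 by linarith
      then show ?thesis by (simp add: cu_def zz_def algebra_simps)
    qed
    also have "\<dots> \<le> a*(5/4)" using poly a by (intro mult_left_mono) auto
    finally have qc: "4*a/5*cu\<^sup>2 + 3*b*cv\<^sup>2 \<le> 5/4*a" by simp
    have qp: "0 \<le> 4*a/5*cu\<^sup>2 + 3*b*cv\<^sup>2" using a b by simp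
    have "Yt\<^sup>2 / t \<le> S" using Y tp by (simp add: divide_le_eq mult.commute)
    have S0: "0 \<le> S" using Y tp by (smt (verit) zero_le_power2 mult_nonneg_nonneg zero_le_mult_iff)
    show "(4*a/5*cu\<^sup>2 + 3*b*cv\<^sup>2) * (Yt\<^sup>2 / t) \<le> 5/4*a*S"
    proof -
      have "(4*a/5*cu\<^sup>2 + 3*b*cv\<^sup>2) * (Yt\<^sup>2 / t) \<le> (5/4*a) * (Yt\<^sup>2 / t)"
        using qc tp by (intro mult_right_mono) auto
      also have "\<dots> \<le> 5/4*a*S" using \<open>Yt\<^sup>2 / t \<le> S\<close> a by (intro mult_left_mono) auto
      finally show ?thesis .
    qed
  qed
  finally show ?thesis by (simp add: A_def B_def C_def D_def T_def cu_def cv_def)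
qed


theorem lemma2:
  fixes D :: "('x \<times> nat) set" and C :: nat
    and f :: "'x \<Rightarrow> nat \<Rightarrow> 'u::euclidean_space \<Rightarrow> 'v::euclidean_space \<Rightarrow> real"
    and h :: "'x \<Rightarrow> 'u \<Rightarrow> 'h::euclidean_space"
    and Dh :: "'x \<Rightarrow> 'u \<Rightarrow> 'u \<Rightarrow> 'h"
    and \<Omega> :: "nat \<Rightarrow> 'h"
    and gu :: "'u \<Rightarrow> 'v \<Rightarrow> 'u" and gv :: "'u \<Rightarrow> 'v \<Rightarrow> 'v" and gL :: "'u \<Rightarrow> 'u"
    and u0 :: 'u and v0 :: 'v
    and lam \<eta>u \<eta>v Lu Lv Luv Lvu G1 G2 \<theta> \<sigma> :: real and \<tau> :: nat
  assumes finD: "finite D" and neD: "D \<noteq> {}"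
    and labels: "\<forall>s\<in>D. snd s \<in> {1..C}"
    and lam: "lam \<ge> 0" and tau: "\<tau> \<ge> 1"
    and eta_pos: "\<eta>u > 0" "\<eta>v > 0"
    and L_pos: "Lu > 0" "Lv > 0" "Luv \<ge> 0" "Lvu \<ge> 0"
    \<comment> \<open>(i) F_k continuously differentiable with partial gradients gu, gv\<close>
    and F_deriv: "\<And>u v. ((\<lambda>p. emp_loss D f (fst p) (snd p)) has_derivative
                     (\<lambda>d. gu u v \<bullet> fst d + gv u v \<bullet> snd d)) (at (u, v))"
    and gu_cont: "continuous_on UNIV (\<lambda>p. gu (fst p) (snd p))"
    and gv_cont: "continuous_on UNIV (\<lambda>p. gv (fst p) (snd p))"
    and Lip_uu: "\<And>u u' v. norm (gu u v - gu u' v) \<le> Lu * norm (u - u')"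
    and Lip_uv: "\<And>u v v'. norm (gu u v - gu u v') \<le> Luv * norm (v - v')"
    and Lip_vv: "\<And>u v v'. norm (gv u v - gv u v') \<le> Lv * norm (v - v')"
    and Lip_vu: "\<And>u u' v. norm (gv u v - gv u' v) \<le> Lvu * norm (u - u')"
    \<comment> \<open>(ii) gradient bounds over all local iterates\<close>
    and G1: "\<And>l. l \<le> \<tau> \<Longrightarrow>
       (norm (gu (fst (local_iter \<eta>u \<eta>v lam gu gv gL u0 v0 l)) (snd (local_iter \<eta>u \<eta>v lam gu gv gL u0 v0 l))))\<^sup>2 \<le> G1\<^sup>2"
    and G2: "\<And>l. l \<le> \<tau> \<Longrightarrow>
       (norm (gv (fst (local_iter \<eta>u \<eta>v lam gu gv gL u0 v0 l)) (snd (local_iter \<eta>u \<eta>v lam gu gv gL u0 v0 l))))\<^sup>2 \<le> G2\<^sup>2"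
    \<comment> \<open>(iii) feature extractor: differentiable with bounded Jacobian and bounded output\<close>
    and h_deriv: "\<And>x u. (h x has_derivative Dh x u) (at u)"
    and Dh_bound: "\<And>x u. (onorm (Dh x u))\<^sup>2 \<le> \<theta>\<^sup>2"
    and h_bound: "\<And>x u. (norm (h x u))\<^sup>2 \<le> \<sigma>\<^sup>2"
    \<comment> \<open>gL is the gradient of the knowledge loss L_k\<close>
    and L_grad: "\<And>u. (knowledge_loss D C h \<Omega> has_derivative (\<lambda>d. gL u \<bullet> d)) (at u)"
    \<comment> \<open>step sizes\<close>
    and eta_u: "\<eta>u \<le> 1 / (4 * real \<tau> * (1 + max Luv Lvu / sqrt (Lu * Lv)) * Lu)"
    and eta_v: "\<eta>v \<le> 1 / (2 * real \<tau> * (1 + max Luv Lvu / sqrt (Lu * Lv)) * Lv)"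
  shows "let chi = max Luv Lvu / sqrt (Lu * Lv);
             it = local_iter \<eta>u \<eta>v lam gu gv gL u0 v0;
             F = emp_loss D f;
             t = real \<tau>;
             A1 = t * (t + 1) * (2 * t + 1) *
                  (\<eta>u ^ 3 * G1\<^sup>2 * Lu\<^sup>2 + (1/3) * \<eta>v ^ 3 * G2\<^sup>2 * Lv\<^sup>2
                   + ((2/3) * \<eta>u * G1\<^sup>2 + (1/2) * \<eta>v * G2\<^sup>2) * \<eta>u * \<eta>v * chi\<^sup>2 * Lu * Lv)
         in F (fst (it \<tau>)) (snd (it \<tau>)) - F u0 v0
            \<le> (2 * (1 + chi) * Lu * \<eta>u\<^sup>2 * t\<^sup>2 - (1/2) * \<eta>u * t) * (norm (gu u0 v0))\<^sup>2
             + ((1 + chi) * Lv * \<eta>v\<^sup>2 * t\<^sup>2 - (1/2) * \<eta>v * t) * (norm (gv u0 v0))\<^sup>2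
             + A1
             + (5/4) * \<eta>u * lam\<^sup>2 * (\<Sum>l<\<tau>. (norm (gL (fst (it l))))\<^sup>2)
             + 2 * \<eta>u\<^sup>2 * lam\<^sup>2 * (3 * \<eta>u * Lu\<^sup>2 + 2 * \<eta>v * chi\<^sup>2 * Lu * Lv)
                 * (\<Sum>l<\<tau>. (t - real l) * (norm (gL (fst (it l))))\<^sup>2)"
  proof -
  define chi where "chi = max Luv Lvu / sqrt (Lu * Lv)"
  define K where "K = 1 + chi"
  define it where "it = local_iter \<eta>u \<eta>v lam gu gv gL u0 v0"
  define uu where "uu l = fst (it l)" for l
  define vv where "vv l = snd (it l)" for l
  define g where "g l = gu (uu l) (vv l)" for l
  define p where "p l = gv (uu l) (vv l)" for l
  define q where "q l = gL (uu l)" for l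
  define t where "t = real \<tau>"
  define G1a where "G1a = \<bar>G1\<bar>"
  define G2a where "G2a = \<bar>G2\<bar>"
  define y where "y l = lam * norm (q l)" for l
  define Yt where "Yt = (\<Sum>l<\<tau>. y l)"
  define S where "S = (\<Sum>l<\<tau>. (y l)\<^sup>2)"
  have tp: "t \<ge> 1" using tau by (simp add: t_def)
  have sq: "sqrt (Lu*Lv) > 0" using L_pos by simp
  have chi0: "chi \<ge> 0" using L_pos sq by (simp add: chi_def)
  have chisq: "chi * sqrt (Lu*Lv) = max Luv Lvu" using sq L_pos by (simp add: chi_def)
  have Luv_le: "Luv \<le> chi * sqrt (Lu*Lv)" unfolding chisq by simp
  have Lvu_le: "Lvu \<le> chi * sqrt (Lu*Lv)" unfolding chisq by simp
  have sq2: "(chi * sqrt (Lu*Lv))\<^sup>2 = chi\<^sup>2*Lu*Lv"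
    using L_pos by (simp add: power_mult_distrib)
  have Luv2: "Luv\<^sup>2 \<le> chi\<^sup>2*Lu*Lv"
    using power_mono[OF Luv_le L_pos(3), of 2] sq2 by simp
  have Lvu2: "Lvu\<^sup>2 \<le> chi\<^sup>2*Lu*Lv"
    using power_mono[OF Lvu_le L_pos(4), of 2] sq2 by simp
  have it_suc: "uu (Suc l) = uu l - \<eta>u *\<^sub>R (g l + lam *\<^sub>R q l)" "vv (Suc l) = vv l - \<eta>v *\<^sub>R p l" for l
    by (simp_all add: uu_def vv_def g_def p_def q_def it_def split_beta Let_def)
  have it0: "uu 0 = u0" "vv 0 = v0" by (simp_all add: uu_def vv_def it_def)
  have uu_sum: "uu l = u0 - \<eta>u *\<^sub>R (\<Sum>j<l. g j + lam *\<^sub>R q j)" for l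
    by (induction l) (simp_all add: it_suc it0 algebra_simps)
  have vv_sum: "vv l = v0 - \<eta>v *\<^sub>R (\<Sum>j<l. p j)" for l
    by (induction l) (simp_all add: it_suc it0 algebra_simps)
  have gb: "norm (g l) \<le> G1a" if "l \<le> \<tau>" for l
  proof -
    have "(norm (g l))\<^sup>2 \<le> G1\<^sup>2" using G1[OF that] unfolding g_def uu_def vv_def it_def .
    then have "(norm (g l))\<^sup>2 \<le> \<bar>G1\<bar>\<^sup>2" by (simp only: power2_abs)
    then show ?thesis unfolding G1a_def by (rule power2_le_imp_le) simp
  qed
  have pb: "norm (p l) \<le> G2a" if "l \<le> \<tau>" for l
  proof -
    have "(norm (p l))\<^sup>2 \<le> G2\<^sup>2" using G2[OF that] unfolding p_def uu_def vv_def it_def .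
    then have "(norm (p l))\<^sup>2 \<le> \<bar>G2\<bar>\<^sup>2" by (simp only: power2_abs)
    then show ?thesis unfolding G2a_def by (rule power2_le_imp_le) simp
  qed
  have G0: "G1a \<ge> 0" "G2a \<ge> 0" by (simp_all add: G1a_def G2a_def)
  have y0: "y l \<ge> 0" for l using lam by (simp add: y_def)
  have Yt0: "Yt \<ge> 0" unfolding Yt_def using y0 by (intro sum_nonneg) auto
  have ysub: "(\<Sum>j<l. y j) \<le> Yt" if "l \<le> \<tau>" for l
    unfolding Yt_def using that y0 by (intro sum_mono2) auto
  have Ul: "norm (uu l - u0) \<le> \<eta>u * (real l * G1a + Yt)" if "l \<le> \<tau>" for l
  proof -
    have "norm (\<Sum>j<l. g j + lam *\<^sub>R q j) \<le> (\<Sum>j<l. G1a + y j)"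
    proof (rule sum_norm_le)
      fix j assume "j \<in> {..<l}"
      then have "j \<le> \<tau>" using that by auto
      have "norm (g j + lam *\<^sub>R q j) \<le> norm (g j) + norm (lam *\<^sub>R q j)" by (rule norm_triangle_ineq)
      also have "\<dots> \<le> G1a + y j" using gb[OF \<open>j \<le> \<tau>\<close>] lam by (simp add: y_def)
      finally show "norm (g j + lam *\<^sub>R q j) \<le> G1a + y j" .
    qed
    also have "\<dots> = real l * G1a + (\<Sum>j<l. y j)" by (simp add: sum.distrib)
    also have "\<dots> \<le> real l * G1a + Yt" using ysub[OF that] by simp
    finally have n: "norm (\<Sum>j<l. g j + lam *\<^sub>R q j) \<le> real l * G1a + Yt" .
    have "norm (uu l - u0) = \<eta>u * norm (\<Sum>j<l. g j + lam *\<^sub>R q j)"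
      using eta_pos by (simp add: uu_sum)
    also have "\<dots> \<le> \<eta>u * (real l * G1a + Yt)" using n eta_pos by (intro mult_left_mono) auto
    finally show ?thesis .
  qed
  have Vl: "norm (vv l - v0) \<le> \<eta>v * (real l * G2a)" if "l \<le> \<tau>" for l
  proof -
    have "norm (\<Sum>j<l. p j) \<le> (\<Sum>j<l. G2a)"
      by (rule sum_norm_le) (use pb that in auto)
    then have n: "norm (\<Sum>j<l. p j) \<le> real l * G2a" by simp
    have "norm (vv l - v0) = \<eta>v * norm (\<Sum>j<l. p j)"
      using eta_pos by (simp add: vv_sum)
    also have "\<dots> \<le> \<eta>v * (real l * G2a)" using n eta_pos by (intro mult_left_mono) auto
    finally show ?thesis .
  qed
  have el: "norm (g l - g 0) \<le> Lu * (\<eta>u * (real l * G1a + Yt)) + Luv * (\<eta>v * (real l * G2a))" if "l \<le> \<tau>" for l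
  proof -
    have a1: "norm (gu (uu l) (vv l) - gu u0 (vv l)) \<le> Lu * (\<eta>u * (real l * G1a + Yt))"
      using Lip_uu[where u="uu l" and u'=u0 and v="vv l"] mult_left_mono[OF Ul[OF that] less_imp_le[OF L_pos(1)]] by linarith
    have a2: "norm (gu u0 (vv l) - gu u0 v0) \<le> Luv * (\<eta>v * (real l * G2a))"
      using Lip_uv[where u=u0 and v="vv l" and v'=v0] mult_left_mono[OF Vl[OF that] L_pos(3)] by linarith
    show ?thesis using norm_diff_triangle_le[OF a1 a2] by (simp add: g_def it0)
  qed
  have fl: "norm (p l - p 0) \<le> Lvu * (\<eta>u * (real l * G1a + Yt)) + Lv * (\<eta>v * (real l * G2a))" if "l \<le> \<tau>" for l
  proof -
    have a1: "norm (gv (uu l) (vv l) - gv u0 (vv l)) \<le> Lvu * (\<eta>u * (real l * G1a + Yt))"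
      using Lip_vu[where u="uu l" and u'=u0 and v="vv l"] mult_left_mono[OF Ul[OF that] L_pos(4)] by linarith
    have a2: "norm (gv u0 (vv l) - gv u0 v0) \<le> Lv * (\<eta>v * (real l * G2a))"
      using Lip_vv[where u=u0 and v="vv l" and v'=v0] mult_left_mono[OF Vl[OF that] less_imp_le[OF L_pos(2)]] by linarith
    show ?thesis using norm_diff_triangle_le[OF a1 a2] by (simp add: p_def it0)
  qed
  have suml: "(\<Sum>l<\<tau>. real l) = t * (t - 1) / 2"
    unfolding t_def by (induction \<tau>) (simp_all add: field_simps)
  define W where "W = (\<Sum>l<\<tau>. g l - g 0 + lam *\<^sub>R q l)"
  define Wv where "Wv = (\<Sum>l<\<tau>. p l - p 0)"
  have Wb: "norm W \<le> (Lu*\<eta>u*G1a + Luv*\<eta>v*G2a) * (t*(t-1)/2) + (1 + Lu*\<eta>u*t) * Yt"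
  proof -
    have "norm W \<le> (\<Sum>l<\<tau>. (Lu*\<eta>u*G1a + Luv*\<eta>v*G2a) * real l + Lu*\<eta>u*Yt + y l)"
      unfolding W_def
    proof (rule sum_norm_le)
      fix l assume "l \<in> {..<\<tau>}"
      then have "l \<le> \<tau>" by auto
      have "norm (g l - g 0 + lam *\<^sub>R q l) \<le> norm (g l - g 0) + norm (lam *\<^sub>R q l)" by (rule norm_triangle_ineq)
      also have "\<dots> \<le> Lu * (\<eta>u * (real l * G1a + Yt)) + Luv * (\<eta>v * (real l * G2a)) + y l"
        using el[OF \<open>l \<le> \<tau>\<close>] lam by (simp add: y_def)
      also have "\<dots> = (Lu*\<eta>u*G1a + Luv*\<eta>v*G2a) * real l + Lu*\<eta>u*Yt + y l" by (simp add: algebra_simps)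
      finally show "norm (g l - g 0 + lam *\<^sub>R q l) \<le> (Lu*\<eta>u*G1a + Luv*\<eta>v*G2a) * real l + Lu*\<eta>u*Yt + y l" .
    qed
    also have "\<dots> = (Lu*\<eta>u*G1a + Luv*\<eta>v*G2a) * (\<Sum>l<\<tau>. real l) + t * (Lu*\<eta>u*Yt) + Yt"
      by (simp add: sum.distrib sum_distrib_left Yt_def t_def)
    also have "\<dots> = (Lu*\<eta>u*G1a + Luv*\<eta>v*G2a) * (t*(t-1)/2) + (1 + Lu*\<eta>u*t) * Yt"
      by (simp add: suml algebra_simps)
    finally show ?thesis .
  qed
  have Wvb: "norm Wv \<le> (Lvu*\<eta>u*G1a + Lv*\<eta>v*G2a) * (t*(t-1)/2) + Lvu*\<eta>u*t * Yt"
  proof -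
    have "norm Wv \<le> (\<Sum>l<\<tau>. (Lvu*\<eta>u*G1a + Lv*\<eta>v*G2a) * real l + Lvu*\<eta>u*Yt)"
      unfolding Wv_def
    proof (rule sum_norm_le)
      fix l assume "l \<in> {..<\<tau>}"
      then have "l \<le> \<tau>" by auto
      have "norm (p l - p 0) \<le> Lvu * (\<eta>u * (real l * G1a + Yt)) + Lv * (\<eta>v * (real l * G2a))"
        using fl[OF \<open>l \<le> \<tau>\<close>] .
      also have "\<dots> = (Lvu*\<eta>u*G1a + Lv*\<eta>v*G2a) * real l + Lvu*\<eta>u*Yt" by (simp add: algebra_simps)
      finally show "norm (p l - p 0) \<le> (Lvu*\<eta>u*G1a + Lv*\<eta>v*G2a) * real l + Lvu*\<eta>u*Yt" .
    qed
    also have "\<dots> = (Lvu*\<eta>u*G1a + Lv*\<eta>v*G2a) * (\<Sum>l<\<tau>. real l) + t * (Lvu*\<eta>u*Yt)"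
      by (simp add: sum.distrib sum_distrib_left t_def)
    also have "\<dots> = (Lvu*\<eta>u*G1a + Lv*\<eta>v*G2a) * (t*(t-1)/2) + Lvu*\<eta>u*t * Yt"
      by (simp add: suml algebra_simps)
    finally show ?thesis .
  qed
  define U where "U = uu \<tau> - u0"
  define V where "V = vv \<tau> - v0"
  have Uform: "U = - \<eta>u *\<^sub>R (t *\<^sub>R g 0 + W)"
  proof -
    have "(\<Sum>j<\<tau>. g j + lam *\<^sub>R q j) = (\<Sum>j<\<tau>. (g j - g 0 + lam *\<^sub>R q j) + g 0)"
      by simp
    also have "\<dots> = W + t *\<^sub>R g 0" by (simp add: sum.distrib sum_subtractf sum_constant_scaleR W_def t_def)
    finally show ?thesis by (simp add: U_def uu_sum algebra_simps)
  qed
  have Vform: "V = - \<eta>v *\<^sub>R (t *\<^sub>R p 0 + Wv)"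
  proof -
    have "(\<Sum>j<\<tau>. p j) = (\<Sum>j<\<tau>. (p j - p 0) + p 0)" by simp
    also have "\<dots> = Wv + t *\<^sub>R p 0" by (simp add: sum.distrib sum_subtractf sum_constant_scaleR Wv_def t_def)
    finally show ?thesis by (simp add: V_def vv_sum algebra_simps)
  qed
  have g0: "g 0 = gu u0 v0" "p 0 = gv u0 v0" by (simp_all add: g_def p_def it0)
  have desc: "emp_loss D f (uu \<tau>) (vv \<tau>) - emp_loss D f u0 v0 \<le> g 0 \<bullet> U + p 0 \<bullet> V
           + (Lu * (norm U)\<^sup>2 + (Luv + Lvu) * norm U * norm V + Lv * (norm V)\<^sup>2) / 2"
    using descent[OF F_deriv Lip_uu Lip_uv Lip_vv Lip_vu, where u=u0 and U=U and v=v0 and V=V]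
    by (simp add: g0 U_def V_def)
  have cross: "(Luv + Lvu) * norm U * norm V \<le> chi * (Lu * (norm U)\<^sup>2 + Lv * (norm V)\<^sup>2)"
  proof -
    have "(Luv + Lvu) * (norm U * norm V) \<le> (2 * chi * sqrt (Lu*Lv)) * (norm U * norm V)"
      using Luv_le Lvu_le by (intro mult_right_mono) auto
    also have "\<dots> = chi * (2 * (sqrt Lu * norm U) * (sqrt Lv * norm V))"
      by (simp add: real_sqrt_mult algebra_simps)
    also have "\<dots> \<le> chi * ((sqrt Lu * norm U)\<^sup>2 + (sqrt Lv * norm V)\<^sup>2)"
      using chi0 sum_squares_bound[of "sqrt Lu * norm U" "sqrt Lv * norm V"]
      by (intro mult_left_mono) (auto simp: algebra_simps)
    also have "\<dots> = chi * (Lu * (norm U)\<^sup>2 + Lv * (norm V)\<^sup>2)"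
      using L_pos by (simp add: power_mult_distrib)
    finally show ?thesis by (simp add: mult.assoc)
  qed
  define n where "n = norm (g 0)"
  define m where "m = norm (p 0)"
  define w where "w = norm W"
  define wv where "wv = norm Wv"
  have Kdef: "K * Lu * \<eta>u * t \<le> 1/4" "0 \<le> K * Lu * \<eta>u * t"
  proof -
    have pos: "0 < 4 * t * K * Lu" using tp chi0 L_pos by (simp add: K_def)
    have "\<eta>u \<le> 1 / (4 * t * K * Lu)" using eta_u by (simp add: t_def K_def chi_def)
    then have "\<eta>u * (4 * t * K * Lu) \<le> 1" using pos by (simp add: le_divide_eq)
    then show "K * Lu * \<eta>u * t \<le> 1/4" by (simp add: algebra_simps)
    show "0 \<le> K * Lu * \<eta>u * t" using chi0 L_pos eta_pos tp by (intro mult_nonneg_nonneg) (auto simp: K_def)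
  qed
  have Kdefv: "K * Lv * \<eta>v * t \<le> 1/2" "0 \<le> K * Lv * \<eta>v * t"
  proof -
    have pos: "0 < 2 * t * K * Lv" using tp chi0 L_pos by (simp add: K_def)
    have "\<eta>v \<le> 1 / (2 * t * K * Lv)" using eta_v by (simp add: t_def K_def chi_def)
    then have "\<eta>v * (2 * t * K * Lv) \<le> 1" using pos by (simp add: le_divide_eq)
    then show "K * Lv * \<eta>v * t \<le> 1/2" by (simp add: algebra_simps)
    show "0 \<le> K * Lv * \<eta>v * t" using chi0 L_pos eta_pos tp by (intro mult_nonneg_nonneg) (auto simp: K_def)
  qed
  have upart: "g 0 \<bullet> U + K * Lu / 2 * (norm U)\<^sup>2 \<le> (2*K*Lu*\<eta>u\<^sup>2*t\<^sup>2 - 1/2*\<eta>u*t)*n\<^sup>2 + 4*\<eta>u/(7*t)*w\<^sup>2"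
  proof -
    have i1: "g 0 \<bullet> U = -\<eta>u*t*n\<^sup>2 - \<eta>u * (g 0 \<bullet> W)"
      by (simp add: Uform n_def inner_add_right power2_norm_eq_inner algebra_simps)
    have i2: "- (g 0 \<bullet> W) \<le> n * w" using Cauchy_Schwarz_ineq2[of "g 0" W] by (simp add: n_def w_def)
    have i3: "norm U \<le> \<eta>u * (t * n + w)"
    proof -
      have "norm U = \<eta>u * norm (t *\<^sub>R g 0 + W)" using eta_pos by (simp add: Uform)
      also have "\<dots> \<le> \<eta>u * (t * n + w)" using eta_pos tp norm_triangle_ineq[of "t *\<^sub>R g 0" W]
        by (intro mult_left_mono) (auto simp: n_def w_def)
      finally show ?thesis .
    qed
    have i4: "(norm U)\<^sup>2 \<le> \<eta>u\<^sup>2 * (t * n + w)\<^sup>2"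
      using power_mono[OF i3 norm_ge_zero, of 2] by (simp add: power_mult_distrib)
    have KL0: "0 \<le> K * Lu / 2" using chi0 L_pos by (simp add: K_def)
    have "g 0 \<bullet> U + K * Lu / 2 * (norm U)\<^sup>2 \<le> -\<eta>u*t*n\<^sup>2 + \<eta>u*n*w + K * Lu / 2 * (\<eta>u\<^sup>2 * (t * n + w)\<^sup>2)"
      using i1 mult_left_mono[OF i2, of "\<eta>u"] mult_left_mono[OF i4 KL0] eta_pos by (simp add: algebra_simps)
    also have "\<dots> = -\<eta>u*t*n\<^sup>2 + \<eta>u*n*w + K*Lu*\<eta>u\<^sup>2/2*(t*n+w)\<^sup>2" by simp
    also have "\<dots> \<le> (2*K*Lu*\<eta>u\<^sup>2*t\<^sup>2 - 1/2*\<eta>u*t)*n\<^sup>2 + 4*\<eta>u/(7*t)*w\<^sup>2"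
      by (rule scal_u) (use eta_pos tp Kdef in auto)
    finally show ?thesis .
  qed
  have vpart: "p 0 \<bullet> V + K * Lv / 2 * (norm V)\<^sup>2 \<le> (K*Lv*\<eta>v\<^sup>2*t\<^sup>2 - 1/2*\<eta>v*t)*m\<^sup>2 + \<eta>v/t*wv\<^sup>2"
  proof -
    have i1: "p 0 \<bullet> V = -\<eta>v*t*m\<^sup>2 - \<eta>v * (p 0 \<bullet> Wv)"
      by (simp add: Vform m_def inner_add_right power2_norm_eq_inner algebra_simps)
    have i2: "- (p 0 \<bullet> Wv) \<le> m * wv" using Cauchy_Schwarz_ineq2[of "p 0" Wv] by (simp add: m_def wv_def)
    have i3: "norm V \<le> \<eta>v * (t * m + wv)"
    proof -
      have "norm V = \<eta>v * norm (t *\<^sub>R p 0 + Wv)" using eta_pos by (simp add: Vform)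
      also have "\<dots> \<le> \<eta>v * (t * m + wv)" using eta_pos tp norm_triangle_ineq[of "t *\<^sub>R p 0" Wv]
        by (intro mult_left_mono) (auto simp: m_def wv_def)
      finally show ?thesis .
    qed
    have i4: "(norm V)\<^sup>2 \<le> \<eta>v\<^sup>2 * (t * m + wv)\<^sup>2"
      using power_mono[OF i3 norm_ge_zero, of 2] by (simp add: power_mult_distrib)
    have KL0: "0 \<le> K * Lv / 2" using chi0 L_pos by (simp add: K_def)
    have "p 0 \<bullet> V + K * Lv / 2 * (norm V)\<^sup>2 \<le> -\<eta>v*t*m\<^sup>2 + \<eta>v*m*wv + K * Lv / 2 * (\<eta>v\<^sup>2 * (t * m + wv)\<^sup>2)"
      using i1 mult_left_mono[OF i2, of "\<eta>v"] mult_left_mono[OF i4 KL0] eta_pos by (simp add: algebra_simps)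
    also have "\<dots> = -\<eta>v*t*m\<^sup>2 + \<eta>v*m*wv + K*Lv*\<eta>v\<^sup>2/2*(t*m+wv)\<^sup>2" by simp
    also have "\<dots> \<le> (K*Lv*\<eta>v\<^sup>2*t\<^sup>2 - 1/2*\<eta>v*t)*m\<^sup>2 + \<eta>v/t*wv\<^sup>2"
      by (rule scal_v) (use eta_pos tp Kdefv in auto)
    finally show ?thesis .
  qed
  have Yt2: "Yt\<^sup>2 \<le> t * S"
    using sum_squared_le_sum_of_squares[of y "{..<\<tau>}"] by (simp add: Yt_def S_def t_def mult.commute)
  have w2: "w\<^sup>2 \<le> ((Lu*\<eta>u*G1a + Luv*\<eta>v*G2a) * (t*(t-1)/2) + (1 + Lu*\<eta>u*t) * Yt)\<^sup>2"
    using power_mono[OF Wb norm_ge_zero, of 2] by (simp add: w_def)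
  have wv2: "wv\<^sup>2 \<le> ((Lvu*\<eta>u*G1a + Lv*\<eta>v*G2a) * (t*(t-1)/2) + Lvu*\<eta>u*t * Yt)\<^sup>2"
    using power_mono[OF Wvb norm_ge_zero, of 2] by (simp add: wv_def)
  have su: "(1+chi)*Lu*\<eta>u*t \<le> 1/4" using Kdef(1) unfolding K_def .
  have sv: "(1+chi)*Lv*\<eta>v*t \<le> 1/2" using Kdefv(1) unfolding K_def .
  have fin: "4*\<eta>u/(7*t)*w\<^sup>2 + \<eta>v/t*wv\<^sup>2 \<le> t*(t+1)*(2*t+1)*(\<eta>u^3*G1a\<^sup>2*Lu\<^sup>2 + (1/3)*\<eta>v^3*G2a\<^sup>2*Lv\<^sup>2
        + ((2/3)*\<eta>u*G1a\<^sup>2 + (1/2)*\<eta>v*G2a\<^sup>2)*\<eta>u*\<eta>v*chi\<^sup>2*Lu*Lv) + 5/4*\<eta>u*S"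
  proof -
    have "4*\<eta>u/(7*t)*w\<^sup>2 + \<eta>v/t*wv\<^sup>2 \<le> 4*\<eta>u/(7*t)*((Lu*\<eta>u*G1a + Luv*\<eta>v*G2a) * (t*(t-1)/2) + (1 + Lu*\<eta>u*t) * Yt)\<^sup>2
        + \<eta>v/t*((Lvu*\<eta>u*G1a + Lv*\<eta>v*G2a) * (t*(t-1)/2) + Lvu*\<eta>u*t * Yt)\<^sup>2"
      using w2 wv2 eta_pos tp by (intro add_mono mult_left_mono) auto
    also have "\<dots> \<le> t*(t+1)*(2*t+1)*(\<eta>u^3*G1a\<^sup>2*Lu\<^sup>2 + (1/3)*\<eta>v^3*G2a\<^sup>2*Lv\<^sup>2
        + ((2/3)*\<eta>u*G1a\<^sup>2 + (1/2)*\<eta>v*G2a\<^sup>2)*\<eta>u*\<eta>v*chi\<^sup>2*Lu*Lv) + 5/4*\<eta>u*S"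
      by (rule final_scal[OF eta_pos L_pos chi0 Luv2 Lvu2 tp su sv G0 Yt0 Yt2])
    finally show ?thesis .
  qed
  have Seq: "S = lam\<^sup>2 * (\<Sum>l<\<tau>. (norm (gL (fst (it l))))\<^sup>2)"
    by (simp add: S_def y_def q_def uu_def power_mult_distrib sum_distrib_left)
  have extra: "0 \<le> 2 * \<eta>u\<^sup>2 * lam\<^sup>2 * (3 * \<eta>u * Lu\<^sup>2 + 2 * \<eta>v * chi\<^sup>2 * Lu * Lv)
                 * (\<Sum>l<\<tau>. (t - real l) * (norm (gL (fst (it l))))\<^sup>2)"
  proof -
    have "0 \<le> (\<Sum>l<\<tau>. (t - real l) * (norm (gL (fst (it l))))\<^sup>2)"
      by (intro sum_nonneg) (auto simp: t_def)
    moreover have "0 \<le> 2 * \<eta>u\<^sup>2 * lam\<^sup>2 * (3 * \<eta>u * Lu\<^sup>2 + 2 * \<eta>v * chi\<^sup>2 * Lu * Lv)"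
      using eta_pos L_pos by simp
    ultimately show ?thesis by simp
  qed
  have G12: "G1a\<^sup>2 = G1\<^sup>2" "G2a\<^sup>2 = G2\<^sup>2" by (simp_all add: G1a_def G2a_def)
  have main: "emp_loss D f (fst (it \<tau>)) (snd (it \<tau>)) - emp_loss D f u0 v0
            \<le> (2 * (1 + chi) * Lu * \<eta>u\<^sup>2 * t\<^sup>2 - (1/2) * \<eta>u * t) * (norm (gu u0 v0))\<^sup>2
             + ((1 + chi) * Lv * \<eta>v\<^sup>2 * t\<^sup>2 - (1/2) * \<eta>v * t) * (norm (gv u0 v0))\<^sup>2
             + t * (t + 1) * (2 * t + 1) *
                  (\<eta>u ^ 3 * G1\<^sup>2 * Lu\<^sup>2 + (1/3) * \<eta>v ^ 3 * G2\<^sup>2 * Lv\<^sup>2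
                   + ((2/3) * \<eta>u * G1\<^sup>2 + (1/2) * \<eta>v * G2\<^sup>2) * \<eta>u * \<eta>v * chi\<^sup>2 * Lu * Lv)
             + (5/4) * \<eta>u * lam\<^sup>2 * (\<Sum>l<\<tau>. (norm (gL (fst (it l))))\<^sup>2)
             + 2 * \<eta>u\<^sup>2 * lam\<^sup>2 * (3 * \<eta>u * Lu\<^sup>2 + 2 * \<eta>v * chi\<^sup>2 * Lu * Lv)
                 * (\<Sum>l<\<tau>. (t - real l) * (norm (gL (fst (it l))))\<^sup>2)"
  proof -
    have "emp_loss D f (fst (it \<tau>)) (snd (it \<tau>)) - emp_loss D f u0 v0
         \<le> g 0 \<bullet> U + p 0 \<bullet> V + (K * (Lu * (norm U)\<^sup>2 + Lv * (norm V)\<^sup>2)) / 2"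
    proof -
      have d2: "emp_loss D f (fst (it \<tau>)) (snd (it \<tau>)) - emp_loss D f u0 v0 \<le> g 0 \<bullet> U + p 0 \<bullet> V
           + (Lu * (norm U)\<^sup>2 + (Luv + Lvu) * norm U * norm V + Lv * (norm V)\<^sup>2) / 2"
        using desc by (simp only: uu_def vv_def)
      have kk: "K * (Lu * (norm U)\<^sup>2 + Lv * (norm V)\<^sup>2) = Lu * (norm U)\<^sup>2 + chi * (Lu * (norm U)\<^sup>2 + Lv * (norm V)\<^sup>2) + Lv * (norm V)\<^sup>2"
        by (simp add: K_def algebra_simps)
      have gen: "E \<le> P + (A + Cc + B)/2 \<Longrightarrow> Cc \<le> X \<Longrightarrow> M = A + X + B \<Longrightarrow> E \<le> P + M/2"
        for E P A B Cc X M :: real by (simp add: field_simps)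
      show ?thesis by (rule gen[OF d2 cross kk])
    qed
    also have "\<dots> = (g 0 \<bullet> U + K * Lu / 2 * (norm U)\<^sup>2) + (p 0 \<bullet> V + K * Lv / 2 * (norm V)\<^sup>2)"
      by (simp add: field_simps)
    also have "\<dots> \<le> ((2*K*Lu*\<eta>u\<^sup>2*t\<^sup>2 - 1/2*\<eta>u*t)*n\<^sup>2 + 4*\<eta>u/(7*t)*w\<^sup>2)
                  + ((K*Lv*\<eta>v\<^sup>2*t\<^sup>2 - 1/2*\<eta>v*t)*m\<^sup>2 + \<eta>v/t*wv\<^sup>2)"
      using upart vpart by (rule add_mono)
    finally have st: "emp_loss D f (fst (it \<tau>)) (snd (it \<tau>)) - emp_loss D f u0 v0
       \<le> ((2*K*Lu*\<eta>u\<^sup>2*t\<^sup>2 - 1/2*\<eta>u*t)*n\<^sup>2 + 4*\<eta>u/(7*t)*w\<^sup>2)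
                  + ((K*Lv*\<eta>v\<^sup>2*t\<^sup>2 - 1/2*\<eta>v*t)*m\<^sup>2 + \<eta>v/t*wv\<^sup>2)" .
    have nn: "n = norm (gu u0 v0)" "m = norm (gv u0 v0)" by (simp_all add: n_def m_def g0)
    have sS: "5/4*\<eta>u*S = (5/4) * \<eta>u * lam\<^sup>2 * (\<Sum>l<\<tau>. (norm (gL (fst (it l))))\<^sup>2)"
      unfolding Seq by (simp only: mult.assoc)
    show ?thesis using st[unfolded nn K_def] fin[unfolded G12] extra sS by linarith
  qed
  show ?thesis unfolding Let_def using main by (simp only: chi_def it_def t_def)
qed

end
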